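(* Let $p$ be an odd prime and let $G_{g\,\mathsf{PR},\,h\,\mathsf{ANY}}(p)$ denote the number of integers $h$ with $1\le h\le p-1$ for which there exists a primitive root $g$ modulo $p$, $1\le g\le p-1$, with $g^{h}\equiv h\pmod p$. Then \[ \left|G_{g\,\mathsf{PR},\,h\,\mathsf{ANY}}(p)-\frac{1}{p-1}\sum_{e\mid p-1}\phi\!\left(\frac{p-1}{e}\right)^{2}\right|\le d(p-1)^{3}\sqrt{p}\,(1+\ln p). \]
   Context: $\phi$ is Euler's totient function, $d(n)$ denotes the number of positive divisors of $n$, the sum runs over positive divisors $e$ of $p-1$, and $\ln$ is the natural logarithm. *)

theory Defs
  imports "HOL-Number_Theory.Number_Theory"
begin

definition num_divisors :: "nat \<Rightarrow> nat" where
  "num_divisors n = card {d. d dvd n}"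

definition G_PR_ANY :: "nat \<Rightarrow> nat" where
  "G_PR_ANY p = card {h \<in> {1..p-1}. \<exists>g \<in> {1..p-1}. residue_primroot p g \<and> [g ^ h = h] (mod p)}"

end

theory Submission
  imports Defs "HOL-Analysis.Analysis"
begin

lemma jordan_sin:
  fixes x :: real
  assumes "0 \<le> x" "x \<le> pi/2"
  shows "2 * x / pi \<le> sin x"
proof -
  have cvx: "convex_on {0..pi/2} (\<lambda>x. - sin x)"
  proof (rule convex_on_realI[where f'="\<lambda>x. - cos x"])
    show "connected {0..pi/2::real}" by simp
    show "((\<lambda>x. - sin x) has_real_derivative - cos x) (at x)" for x
      by (auto intro!: derivative_eq_intros)
    show "- cos x \<le> - cos y" if "x \<in> {0..pi/2}" "y \<in> {0..pi/2}" "x \<le> y" for x y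
      using that by (auto intro!: cos_monotone_0_pi_le)
  qed
  define u where "u = 2 * x / pi"
  have u: "0 \<le> u" "u \<le> 1" using assms by (auto simp: u_def field_simps)
  have "- sin ((1 - u) *\<^sub>R 0 + u *\<^sub>R (pi/2)) \<le> (1 - u) * (- sin 0) + u * (- sin (pi/2))"
    using u by (intro convex_onD[OF cvx]) auto
  moreover have "(1 - u) *\<^sub>R 0 + u *\<^sub>R (pi/2) = x" by (simp add: u_def)
  ultimately have "- sin x \<le> - u" by simp
  thus ?thesis by (simp add: u_def)
qed

lemma harm_le_ln: "k \<ge> 1 \<Longrightarrow> (harm k :: real) \<le> 1 + ln (real k)"
  using euler_mascheroni_sequence_decreasing[of 1 k] by (simp add: harm_def)

definition ef :: "nat \<Rightarrow> int \<Rightarrow> complex" where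
  "ef p z = cis (2 * pi * of_int z / of_nat p)"

lemma ef_add: "ef p (a + b) = ef p a * ef p b"
  by (simp add: ef_def cis_mult add_divide_distrib distrib_left)

lemma ef_mult_p: "p > 0 \<Longrightarrow> ef p (int p * k) = 1"
proof -
  assume "p > 0"
  hence "2 * pi * of_int (int p * k) / of_nat p = 2 * pi * of_int k" by simp
  thus ?thesis unfolding ef_def by simp
qed

lemma ef_mod: "p > 0 \<Longrightarrow> ef p (z mod int p) = ef p z"
proof -
  assume p: "p > 0"
  have "ef p z = ef p (z mod int p + int p * (z div int p))" by simp
  also have "\<dots> = ef p (z mod int p)" using p by (simp only: ef_add ef_mult_p) simp
  finally show ?thesis by simp
qed

lemma ef_cong: "p > 0 \<Longrightarrow> [a = b] (mod int p) \<Longrightarrow> ef p a = ef p b"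
proof -
  assume p: "p > 0" and c: "[a = b] (mod int p)"
  have "ef p a = ef p (a mod int p)" using ef_mod[OF p] by simp
  also have "a mod int p = b mod int p" using c by (simp add: Cong.cong_def)
  also have "ef p (b mod int p) = ef p b" using ef_mod[OF p] by simp
  finally show ?thesis .
qed

lemma norm_ef [simp]: "norm (ef p z) = 1" by (simp add: ef_def)

lemma cnj_ef: "cnj (ef p z) = ef p (- z)" by (simp add: ef_def cis_cnj)

lemma ef_0 [simp]: "ef p 0 = 1" by (simp add: ef_def)

lemma ef_power: "ef p z ^ k = ef p (int k * z)"
proof -
  have "ef p z ^ k = cis (real k * (2 * pi * of_int z / of_nat p))" unfolding ef_def by (rule Complex.DeMoivre)
  also have "real k * (2 * pi * of_int z / of_nat p) = 2 * pi * of_int (int k * z) / of_nat p" by simp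
  finally show ?thesis by (simp add: ef_def)
qed

lemma ef_eq_1_imp: "p > 0 \<Longrightarrow> ef p z = 1 \<Longrightarrow> int p dvd z"
proof -
  assume p: "p > 0" and "ef p z = 1"
  hence "cos (2 * pi * of_int z / of_nat p) = 1" unfolding ef_def
    by (simp add: complex_eq_iff)
  then obtain k :: int where k: "2 * pi * of_int z / of_nat p = of_int k * 2 * pi"
    by (auto simp: cos_one_2pi_int)
  hence "real_of_int z = of_int k * of_nat p" using p by (simp add: field_simps)
  hence "real_of_int z = real_of_int (k * int p)" by simp
  hence "z = k * int p" by (simp only: of_int_eq_iff)
  thus ?thesis by simp
qed

lemma ef_sum:
  assumes p: "p > 0"
  shows "(\<Sum>t<p. ef p (int t * z)) = (if int p dvd z then of_nat p else 0)"
proof (cases "int p dvd z")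
  case True
  then obtain k where "z = int p * k" by blast
  hence "ef p (int t * z) = 1" for t using ef_mult_p[OF p, of "int t * k"] by (simp add: mult_ac)
  thus ?thesis using True by simp
next
  case False
  define w where "w = ef p z"
  have w1: "w \<noteq> 1" using ef_eq_1_imp[OF p] False by (auto simp: w_def)
  have "(\<Sum>t<p. ef p (int t * z)) = (\<Sum>t<p. w ^ t)" by (simp add: w_def ef_power)
  also have "\<dots> = (w ^ p - 1) / (w - 1)" using w1 by (rule geometric_sum)
  also have "w ^ p = 1" using ef_mult_p[OF p, of z] by (simp add: w_def ef_power)
  finally show ?thesis using False by simp
qed

lemma norm_cis_minus_1: "norm (cis th - 1) = 2 * \<bar>sin (th / 2)\<bar>"
proof -
  have "norm (cis th - 1) ^ 2 = (cos th - 1)^2 + (sin th)^2"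
    by (simp add: cmod_power2)
  also have "\<dots> = 2 - 2 * cos th" by (simp add: power2_eq_square algebra_simps sin_squared_eq)
  also have "cos th = cos (2 * (th/2))" by simp
  also have "\<dots> = 1 - 2 * (sin (th/2))^2" by (rule cos_double_sin)
  finally have sq: "norm (cis th - 1) ^ 2 = (2 * \<bar>sin (th / 2)\<bar>) ^ 2" by (simp add: power2_eq_square)
  have "norm (cis th - 1) = sqrt (norm (cis th - 1) ^ 2)" by simp
  also have "\<dots> = sqrt ((2 * \<bar>sin (th / 2)\<bar>) ^ 2)" by (simp only: sq)
  also have "\<dots> = 2 * \<bar>sin (th / 2)\<bar>" by (simp only: real_sqrt_abs)
  finally show ?thesis .
qed

lemma norm_T_bound:
  assumes p: "p > 0" and t: "1 \<le> t" "t < p"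
  shows "norm (\<Sum>j\<in>{1..N}. ef p (- (int t * int j))) \<le> 1 / sin (pi * real t / real p)"
proof -
  define w where "w = ef p (- int t)"
  have w1: "w \<noteq> 1"
  proof
    assume "w = 1"
    have "int p dvd - int t" by (rule ef_eq_1_imp[OF p]) (use \<open>w = 1\<close> in \<open>simp add: w_def\<close>)
    hence "int p dvd int t" by (simp only: dvd_minus_iff)
    hence "p dvd t" by (simp only: int_dvd_int_iff)
    thus False using t by (auto dest: dvd_imp_le)
  qed
  have sinpos: "sin (pi * real t / real p) > 0"
    using t by (intro sin_gt_zero) (auto simp: field_simps)
  have "(\<Sum>j\<in>{1..N}. ef p (- (int t * int j))) = (\<Sum>j\<in>{1..N}. w ^ j)"
    by (intro sum.cong refl) (simp add: w_def ef_power mult_ac)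
  also have "\<dots> = (\<Sum>i<N. w ^ Suc i)"
    by (rule sum.reindex_bij_witness[where j="\<lambda>j. j - 1" and i="Suc"]) auto
  also have "\<dots> = w * (\<Sum>i<N. w ^ i)" by (simp add: sum_distrib_left)
  also have "\<dots> = w * ((w ^ N - 1) / (w - 1))" using w1 by (simp add: geometric_sum)
  finally have eq: "(\<Sum>j\<in>{1..N}. ef p (- (int t * int j))) = w * ((w ^ N - 1) / (w - 1))" .
  have nw: "norm w = 1" by (simp add: w_def)
  have "norm (w ^ N - 1) \<le> norm (w ^ N) + norm (1::complex)" by (rule norm_triangle_ineq4)
  hence num: "norm (w ^ N - 1) \<le> 2" by (simp add: norm_power nw)
  have "w - 1 = cis (- (2 * pi * real t / real p)) - 1" by (simp add: w_def ef_def)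
  hence "norm (w - 1) = 2 * \<bar>sin (- (2 * pi * real t / real p) / 2)\<bar>" by (simp add: norm_cis_minus_1)
  also have "- (2 * pi * real t / real p) / 2 = - (pi * real t / real p)" by simp
  finally have den: "norm (w - 1) = 2 * sin (pi * real t / real p)" using sinpos by simp
  have "norm (w * ((w ^ N - 1) / (w - 1))) = norm (w ^ N - 1) / norm (w - 1)"
    by (simp add: norm_mult norm_divide nw)
  also have "\<dots> \<le> 2 / (2 * sin (pi * real t / real p))"
    unfolding den using num sinpos by (intro divide_right_mono) auto
  also have "\<dots> = 1 / sin (pi * real t / real p)" by simp
  finally show ?thesis using eq by simp
qed

lemma inv_sin_sum_bound:
  assumes "odd p" "p \<ge> 3"
  shows "(\<Sum>t\<in>{1..p-1}. 1 / sin (pi * real t / real p)) \<le> real p * (1 + ln ((real p - 1) / 2))"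
proof -
  define k where "k = (p - 1) div 2"
  have pk: "p = 2 * k + 1" using assms by (auto simp: k_def elim!: oddE)
  have k1: "k \<ge> 1" using assms pk by linarith
  define f where "f = (\<lambda>t::nat. 1 / sin (pi * real t / real p))"
  have fb: "f s \<le> real p / 2 * inverse (real s)" if "s \<in> {1..k}" for s
  proof -
    have x0: "0 \<le> pi * real s / real p" by simp
    have "real s * 2 \<le> real p" using that pk by simp
    hence le1: "2 * real s / real p \<le> 1" using pk by (simp add: divide_simps)
    have "pi * real s / real p = (pi/2) * (2 * real s / real p)" by simp
    also have "\<dots> \<le> (pi/2) * 1" by (rule mult_left_mono[OF le1]) simp
    finally have x1: "pi * real s / real p \<le> pi / 2" by simp
    have "2 * (pi * real s / real p) / pi \<le> sin (pi * real s / real p)"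
      by (rule jordan_sin[OF x0 x1])
    hence j: "2 * real s / real p \<le> sin (pi * real s / real p)" by simp
    have pos: "0 < 2 * real s / real p" using that pk by auto
    have sp: "0 < sin (pi * real s / real p)" using pos j by linarith
    have "0 < sin (pi * real s / real p) * (2 * real s / real p)" using sp pos by (rule mult_pos_pos)
    hence "f s \<le> 1 / (2 * real s / real p)" unfolding f_def
      by (intro divide_left_mono[OF j]) simp_all
    thus ?thesis using that by (simp add: field_simps)
  qed
  have split: "{1..p-1} = {1..k} \<union> {k+1..2*k}" using pk by auto
  have "(\<Sum>t\<in>{1..p-1}. f t) = (\<Sum>t\<in>{1..k}. f t) + (\<Sum>t\<in>{k+1..2*k}. f t)"
    unfolding split by (rule sum.union_disjoint) auto
  also have "(\<Sum>t\<in>{k+1..2*k}. f t) = (\<Sum>s\<in>{1..k}. f (p - s))"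
    by (rule sum.reindex_bij_witness[where i="\<lambda>t. p - t" and j="\<lambda>s. p - s"]) (use pk in auto)
  also have "(\<Sum>s\<in>{1..k}. f (p - s)) = (\<Sum>s\<in>{1..k}. f s)"
  proof (intro sum.cong refl)
    fix s assume "s \<in> {1..k}"
    hence "real (p - s) = real p - real s" using pk by auto
    hence "pi * real (p - s) / real p = pi - pi * real s / real p" using pk by (simp add: field_simps)
    thus "f (p - s) = f s" unfolding f_def by (simp add: sin_diff)
  qed
  also have "(\<Sum>t\<in>{1..k}. f t) + (\<Sum>t\<in>{1..k}. f t) \<le>
      (\<Sum>t\<in>{1..k}. real p / 2 * inverse (real t)) + (\<Sum>t\<in>{1..k}. real p / 2 * inverse (real t))"
    using fb by (intro add_mono sum_mono) auto
  also have "\<dots> = real p * harm k" unfolding harm_def by (simp add: sum_distrib_left sum_divide_distrib[symmetric])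
  also have "\<dots> \<le> real p * (1 + ln (real k))" using harm_le_ln[OF k1] by (intro mult_left_mono) auto
  also have "real k = (real p - 1) / 2" using pk by simp
  finally show ?thesis by (simp add: f_def)
qed

lemma dvd_diff_small:
  assumes "x \<in> {1..p-1}" "j \<in> {1..p-1}"
  shows "int p dvd (int x - int j) \<longleftrightarrow> x = j"
proof
  assume d: "int p dvd (int x - int j)"
  show "x = j"
  proof (rule ccontr)
    assume "x \<noteq> j"
    hence "int x - int j \<noteq> 0" by simp
    hence "\<bar>int p\<bar> \<le> \<bar>int x - int j\<bar>" using d by (rule dvd_imp_le_int)
    thus False using assms by auto
  qed
qed simp

lemma count_fourier:
  assumes p3: "p \<ge> 3" and podd: "odd p" and C: "C \<subseteq> {1..p-1}" and N: "N \<le> p - 1"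
    and Sb: "\<And>t. t \<in> {1..p-1} \<Longrightarrow> norm (\<Sum>x\<in>C. ef p (int t * int x)) \<le> sqrt (real p)"
  shows "\<bar>real (card {j\<in>{1..N}. j \<in> C}) - real (card C) * real N / real p\<bar>
           \<le> sqrt (real p) * (1 + ln ((real p - 1) / 2))"
proof -
  have p: "p > 0" using p3 by simp
  have finC: "finite C" using C finite_subset by blast
  define S where "S = (\<lambda>t::nat. \<Sum>x\<in>C. ef p (int t * int x))"
  define T where "T = (\<lambda>t::nat. \<Sum>j\<in>{1..N}. ef p (- (int t * int j)))"
  define A where "A = card {j\<in>{1..N}. j \<in> C}"
  have "(\<Sum>t<p. S t * T t) = (\<Sum>t<p. \<Sum>x\<in>C. \<Sum>j\<in>{1..N}. ef p (int t * (int x - int j)))"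
    unfolding S_def T_def
    by (simp add: sum_product ef_add[symmetric] algebra_simps)
  also have "\<dots> = (\<Sum>x\<in>C. \<Sum>j\<in>{1..N}. \<Sum>t<p. ef p (int t * (int x - int j)))"
    by (simp add: sum.swap[of _ "{..<p}"] sum.swap[of _ "{1..N}"])
  also have "\<dots> = (\<Sum>x\<in>C. \<Sum>j\<in>{1..N}. if x = j then of_nat p else 0)"
  proof (intro sum.cong refl)
    fix x j assume "x \<in> C" "j \<in> {1..N}"
    hence "x \<in> {1..p-1}" "j \<in> {1..p-1}" using C N by auto
    thus "(\<Sum>t<p. ef p (int t * (int x - int j))) = (if x = j then of_nat p else 0)"
      by (simp add: ef_sum[OF p] dvd_diff_small)
  qed
  also have "\<dots> = (\<Sum>x\<in>C. if x \<in> {1..N} then of_nat p else 0)"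
    by (intro sum.cong refl) (simp add: sum.delta)
  also have "\<dots> = of_nat p * of_nat A"
    using finC by (simp add: sum.If_cases A_def Int_def conj_commute)
  finally have main: "(\<Sum>t<p. S t * T t) = of_nat p * of_nat A" .
  have split: "{..<p} = insert 0 {1..p-1}" using p by auto
  have S0: "S 0 = of_nat (card C)" by (simp add: S_def)
  have T0: "T 0 = of_nat N" by (simp add: T_def)
  have "(\<Sum>t<p. S t * T t) = S 0 * T 0 + (\<Sum>t\<in>{1..p-1}. S t * T t)"
    unfolding split by (subst sum.insert) auto
  with main S0 T0 have e2: "of_nat (card C) * of_nat N + (\<Sum>t\<in>{1..p-1}. S t * T t) = of_nat p * of_nat A"
    by simp
  have eq: "of_nat p * of_nat A - of_nat (card C) * of_nat N = (\<Sum>t\<in>{1..p-1}. S t * T t)"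
    unfolding diff_eq_eq using e2 by (simp only: add.commute)
  have "norm (\<Sum>t\<in>{1..p-1}. S t * T t) \<le> (\<Sum>t\<in>{1..p-1}. norm (S t * T t))"
    by (rule norm_sum)
  also have "\<dots> \<le> (\<Sum>t\<in>{1..p-1}. sqrt (real p) * (1 / sin (pi * real t / real p)))"
  proof (intro sum_mono)
    fix t assume t: "t \<in> {1..p-1}"
    have "norm (S t * T t) = norm (S t) * norm (T t)" by (simp add: norm_mult)
    also have "\<dots> \<le> sqrt (real p) * (1 / sin (pi * real t / real p))"
      using t Sb[OF t] norm_T_bound[OF p, of t N]
      by (intro mult_mono) (auto simp: S_def T_def)
    finally show "norm (S t * T t) \<le> sqrt (real p) * (1 / sin (pi * real t / real p))" .
  qed
  also have "\<dots> = sqrt (real p) * (\<Sum>t\<in>{1..p-1}. 1 / sin (pi * real t / real p))"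
    by (simp add: sum_distrib_left)
  also have "\<dots> \<le> sqrt (real p) * (real p * (1 + ln ((real p - 1) / 2)))"
    by (intro mult_left_mono inv_sin_sum_bound podd p3) auto
  finally have b: "norm (of_nat p * of_nat A - of_nat (card C) * of_nat N :: complex)
      \<le> sqrt (real p) * (real p * (1 + ln ((real p - 1) / 2)))" using eq by simp
  have "norm (of_nat p * of_nat A - of_nat (card C) * of_nat N :: complex)
      = \<bar>real p * real A - real (card C) * real N\<bar>"
  proof -
    have "(of_nat p * of_nat A - of_nat (card C) * of_nat N :: complex)
       = of_real (real p * real A - real (card C) * real N)" by simp
    thus ?thesis by (simp only: norm_of_real)
  qed
  also have "real p * real A - real (card C) * real N
      = real p * (real A - real (card C) * real N / real p)" using p by (simp add: field_simps)
  finally have "real p * \<bar>real A - real (card C) * real N / real p\<bar>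
      \<le> real p * (sqrt (real p) * (1 + ln ((real p - 1) / 2)))"
    using b p by (simp add: abs_mult mult_ac)
  thus ?thesis using p unfolding A_def by simp
qed

lemma small_not_dvd:
  fixes u p :: nat
  assumes "1 \<le> u" "u \<le> p - 1"
  shows "\<not> p dvd u"
proof
  assume "p dvd u"
  hence "p \<le> u" using assms(1) by (intro dvd_imp_le) auto
  hence "p = 0" using assms by linarith
  thus False using \<open>p dvd u\<close> assms(1) by simp
qed

lemma mod_mult_in_range:
  fixes p u x :: nat
  assumes "prime p" "u \<in> {1..p-1}" "x \<in> {1..p-1}"
  shows "(u * x) mod p \<in> {1..p-1}"
proof -
  have "\<not> p dvd u" "\<not> p dvd x" using assms small_not_dvd[of u p] small_not_dvd[of x p] by auto
  hence "\<not> p dvd u * x" using assms(1) by (simp add: prime_dvd_mult_iff)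
  hence "(u * x) mod p \<noteq> 0" by (simp add: dvd_eq_mod_eq_0)
  moreover have "(u * x) mod p < p" using assms(1) prime_gt_0_nat by auto
  ultimately show ?thesis by auto
qed

lemma mod_mult_inj:
  fixes p u :: nat
  assumes "prime p" "u \<in> {1..p-1}"
  shows "inj_on (\<lambda>x. (u * x) mod p) {1..p-1}"
proof
  fix x y assume x: "x \<in> {1..p-1}" and y: "y \<in> {1..p-1}" and e: "(u * x) mod p = (u * y) mod p"
  have cop: "coprime u p" using assms
  proof -
    have "\<not> p dvd u" using assms small_not_dvd[of u p] by auto
    hence "coprime p u" using assms(1) by (intro prime_imp_coprime)
    thus ?thesis by (simp add: coprime_commute)
  qed
  have "[u * x = u * y] (mod p)" using e by (simp add: Cong.cong_def)
  hence "[x = y] (mod p)" using cop by (simp add: cong_mult_lcancel_nat)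
  hence "x mod p = y mod p" by (simp add: Cong.cong_def)
  moreover have "x < p" "y < p" using x y by auto
  ultimately show "x = y" by simp
qed

lemma period_bound:
  assumes pr: "prime p" and C: "C \<subseteq> {1..p-1}" and H: "H \<subseteq> {1..p-1}" and card: "card H = card C"
    and cl: "\<And>u x. u \<in> H \<Longrightarrow> x \<in> C \<Longrightarrow> (u * x) mod p \<in> C"
    and t: "t \<in> {1..p-1}"
  shows "norm (\<Sum>x\<in>C. ef p (int t * int x)) \<le> sqrt (real p)"
proof -
  have p: "p > 0" using pr prime_gt_0_nat by blast
  have finC: "finite C" using C finite_subset by blast
  have finH: "finite H" using H finite_subset by blast
  define S where "S = (\<lambda>t::nat. \<Sum>x\<in>C. ef p (int t * int x))"
  define c where "c = card C"
  have sq: "complex_of_real (norm (S t) ^ 2) = (\<Sum>x\<in>C. \<Sum>y\<in>C. ef p (int t * (int x - int y)))" for t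
  proof -
    have "complex_of_real (norm (S t) ^ 2) = S t * cnj (S t)" by (rule complex_norm_square)
    also have "\<dots> = (\<Sum>x\<in>C. \<Sum>y\<in>C. ef p (int t * int x) * ef p (- (int t * int y)))"
      by (simp add: S_def cnj_sum cnj_ef sum_product)
    also have "\<dots> = (\<Sum>x\<in>C. \<Sum>y\<in>C. ef p (int t * (int x - int y)))"
      by (simp add: ef_add[symmetric] algebra_simps)
    finally show ?thesis .
  qed
  have "complex_of_real (\<Sum>t<p. norm (S t) ^ 2) = (\<Sum>t<p. \<Sum>x\<in>C. \<Sum>y\<in>C. ef p (int t * (int x - int y)))"
    by (subst of_real_sum) (rule sum.cong[OF refl sq])
  also have "\<dots> = (\<Sum>x\<in>C. \<Sum>t<p. \<Sum>y\<in>C. ef p (int t * (int x - int y)))"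
    by (rule sum.swap)
  also have "\<dots> = (\<Sum>x\<in>C. \<Sum>y\<in>C. \<Sum>t<p. ef p (int t * (int x - int y)))"
    by (rule sum.cong[OF refl], rule sum.swap)
  also have "\<dots> = (\<Sum>x\<in>C. \<Sum>y\<in>C. if x = y then of_nat p else 0)"
  proof (intro sum.cong refl)
    fix x y assume "x \<in> C" "y \<in> C"
    hence "x \<in> {1..p-1}" "y \<in> {1..p-1}" using C by auto
    thus "(\<Sum>t<p. ef p (int t * (int x - int y))) = (if x = y then of_nat p else 0)"
      by (simp add: ef_sum[OF p] dvd_diff_small)
  qed
  also have "\<dots> = of_nat p * of_nat c"
    using finC by (simp add: sum.delta c_def)
  also have "\<dots> = complex_of_real (real p * real c)" by (simp only: of_real_mult of_real_of_nat_eq)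
  finally have pars: "(\<Sum>t<p. norm (S t) ^ 2) = real p * real c"
    by (simp only: of_real_eq_iff)
  have split: "{..<p} = insert 0 {1..p-1}" using p by auto
  have S0: "S 0 = of_nat c" by (simp add: S_def c_def)
  have "(\<Sum>t<p. norm (S t) ^ 2) = norm (S 0) ^ 2 + (\<Sum>t\<in>{1..p-1}. norm (S t) ^ 2)"
    unfolding split by (subst sum.insert) auto
  hence rest: "(\<Sum>t\<in>{1..p-1}. norm (S t) ^ 2) \<le> real p * real c"
    using pars by simp
  have inv: "S ((t * u) mod p) = S t" if u: "u \<in> H" for u
  proof -
    have u1: "u \<in> {1..p-1}" using u H by auto
    have bij: "bij_betw (\<lambda>x. (u * x) mod p) C C"
    proof -
      have inj: "inj_on (\<lambda>x. (u * x) mod p) C"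
        using mod_mult_inj[OF pr u1] C inj_on_subset by blast
      have "(\<lambda>x. (u * x) mod p) ` C \<subseteq> C" using cl u by auto
      moreover have "card ((\<lambda>x. (u * x) mod p) ` C) = card C" using inj by (rule card_image)
      ultimately have "(\<lambda>x. (u * x) mod p) ` C = C" using finC by (intro card_subset_eq) auto
      thus ?thesis using inj by (simp add: bij_betw_def)
    qed
    have "S ((t * u) mod p) = (\<Sum>x\<in>C. ef p (int t * int ((u * x) mod p)))"
    proof (unfold S_def, intro sum.cong refl ef_cong[OF p])
      fix x
      show "[int ((t * u) mod p) * int x = int t * int ((u * x) mod p)] (mod int p)"
      proof -
        have c1: "[int ((t * u) mod p) * int x = int (t * u) * int x] (mod int p)"
          by (intro cong_mult cong_refl) (simp add: Cong.cong_def zmod_int)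
        have c2: "[int t * int ((u * x) mod p) = int t * int (u * x)] (mod int p)"
          by (intro cong_mult cong_refl) (simp add: Cong.cong_def zmod_int)
        have e: "int (t * u) * int x = int t * int (u * x)" by simp
        have c1': "[int ((t * u) mod p) * int x = int t * int (u * x)] (mod int p)"
          using c1 unfolding e .
        show ?thesis by (rule cong_trans[OF c1' cong_sym[OF c2]])
      qed
    qed
    also have "\<dots> = (\<Sum>y\<in>C. ef p (int t * int y))"
      using bij by (rule sum.reindex_bij_betw)
    finally show ?thesis by (simp add: S_def)
  qed
  have t1: "t \<in> {1..p-1}" by fact
  have injt: "inj_on (\<lambda>u. (t * u) mod p) H"
    using mod_mult_inj[OF pr t1] H inj_on_subset by blast
  have imgt: "(\<lambda>u. (t * u) mod p) ` H \<subseteq> {1..p-1}"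
    using mod_mult_in_range[OF pr t1] H by auto
  have "real c * norm (S t) ^ 2 = (\<Sum>u\<in>H. norm (S ((t * u) mod p)) ^ 2)"
    using card by (simp add: inv c_def)
  also have "\<dots> = (\<Sum>t'\<in>(\<lambda>u. (t * u) mod p) ` H. norm (S t') ^ 2)"
    using injt by (simp add: sum.reindex)
  also have "\<dots> \<le> (\<Sum>t'\<in>{1..p-1}. norm (S t') ^ 2)"
    using imgt by (intro sum_mono2) auto
  also have "\<dots> \<le> real p * real c" by (rule rest)
  finally have key: "real c * norm (S t) ^ 2 \<le> real c * real p" by (simp add: mult_ac)
  show ?thesis
  proof (cases "c = 0")
    case True
    hence "C = {}" using finC by (simp add: c_def)
    thus ?thesis by simp
  next
    case False
    hence "norm (S t) ^ 2 \<le> real p" using key by simp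
    hence "sqrt (norm (S t) ^ 2) \<le> sqrt (real p)" by (rule real_sqrt_le_mono)
    thus ?thesis by (simp add: S_def)
  qed
qed


lemma card_multiples:
  fixes b m :: nat
  assumes "b > 0" "b dvd m"
  shows "card {i. i < m \<and> b dvd i} = m div b"
proof -
  have "{i. i < m \<and> b dvd i} = (\<lambda>j. b * j) ` {..< m div b}"
  proof (rule equalityI; rule subsetI)
    fix i assume "i \<in> {i. i < m \<and> b dvd i}"
    then obtain j where j: "i = b * j" "b * j < m" by auto
    have "b * j < b * (m div b)" using j assms by simp
    hence "j < m div b" by simp
    thus "i \<in> (\<lambda>j. b * j) ` {..< m div b}" using j by auto
  next
    fix i assume "i \<in> (\<lambda>j. b * j) ` {..< m div b}"
    then obtain j where j: "i = b * j" "j < m div b" by auto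
    hence "b * j < b * (m div b)" using mult_strict_left_mono[OF j(2) assms(1)] by simp
    also have "\<dots> = m" using assms by simp
    finally show "i \<in> {i. i < m \<and> b dvd i}" using j by auto
  qed
  moreover have "inj_on (\<lambda>j. b * j) {..< m div b}" using assms by (auto intro: inj_onI)
  ultimately show ?thesis by (simp add: card_image)
qed

locale proot =
  fixes p g :: nat
  assumes pr: "prime p" and podd: "odd p" and groot: "residue_primroot p g"
begin

lemma p_gt1: "p > 1" using pr prime_gt_1_nat by blast
lemma p_ge3: "p \<ge> 3"
proof -
  have "p \<ge> 2" using p_gt1 by simp
  moreover have "p \<noteq> 2" using podd by auto
  ultimately show ?thesis by simp
qed

lemma tot_p: "totient p = p - 1" using pr by (rule totient_prime)
lemma totatives_p: "totatives p = {1..p-1}"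
  using pr by (auto simp: totatives_prime)
lemma ord_g: "ord p g = p - 1" using groot tot_p by (simp add: residue_primroot_def)
lemma cop_g: "coprime p g" using groot by (simp add: residue_primroot_def)

lemma gbij: "bij_betw (\<lambda>i. g ^ i mod p) {..<p-1} {1..p-1}"
  using residue_primroot_is_generator[OF p_gt1 groot] tot_p totatives_p by simp

definition ind :: "nat \<Rightarrow> nat" where
  "ind x = inv_into {..<p-1} (\<lambda>i. g ^ i mod p) x"

lemma ind_lt: "x \<in> {1..p-1} \<Longrightarrow> ind x < p - 1"
proof -
  assume x: "x \<in> {1..p-1}"
  have "x \<in> (\<lambda>i. g ^ i mod p) ` {..<p-1}" using gbij x by (simp add: bij_betw_def)
  hence "inv_into {..<p-1} (\<lambda>i. g ^ i mod p) x \<in> {..<p-1}" by (rule inv_into_into)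
  thus ?thesis by (simp add: ind_def)
qed

lemma ind_pow: "x \<in> {1..p-1} \<Longrightarrow> g ^ ind x mod p = x"
  unfolding ind_def by (rule bij_betw_inv_into_right[OF gbij])

lemma ind_cong: assumes x: "x \<in> {1..p-1}" shows "[g ^ ind x = x] (mod p)"
proof -
  have "x < p" using x p_gt1 by auto
  thus ?thesis using ind_pow[OF x] by (simp add: Cong.cong_def)
qed

lemma pow_cong_iff: "[g ^ a = g ^ b] (mod p) \<longleftrightarrow> [a = b] (mod (p - 1))"
  using order_divides_expdiff[OF cop_g] ord_g by simp

lemma ind_dvd_iff:
  assumes x: "x \<in> {1..p-1}" and b: "b dvd p - 1"
  shows "b dvd ind x \<longleftrightarrow> [x ^ ((p - 1) div b) = 1] (mod p)"
proof -
  define r where "r = (p - 1) div b"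
  have b0: "b > 0" using b p_gt1 by (auto intro!: Nat.gr0I)
  have br: "p - 1 = b * r" using b by (simp add: r_def)
  have r0: "r > 0" using br p_gt1 by (auto intro!: Nat.gr0I)
  have "[x ^ r = 1] (mod p) \<longleftrightarrow> [g ^ (ind x * r) = 1] (mod p)"
  proof -
    have "[(g ^ ind x) ^ r = x ^ r] (mod p)" using ind_cong[OF x] by (rule cong_pow)
    hence "[g ^ (ind x * r) = x ^ r] (mod p)" by (simp add: power_mult)
    thus ?thesis by (meson cong_sym cong_trans)
  qed
  also have "\<dots> \<longleftrightarrow> [g ^ (ind x * r) = g ^ 0] (mod p)" by simp
  also have "\<dots> \<longleftrightarrow> [ind x * r = 0] (mod (p - 1))" by (rule pow_cong_iff)
  also have "\<dots> \<longleftrightarrow> b * r dvd ind x * r" using br by (simp add: cong_0_iff)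
  also have "\<dots> \<longleftrightarrow> b dvd ind x" using r0 by simp
  finally show ?thesis by (simp add: r_def)
qed


definition Hs :: "nat \<Rightarrow> nat set" where
  "Hs r = {u\<in>{1..p-1}. [u ^ r = 1] (mod p)}"

definition Cs :: "nat \<Rightarrow> nat \<Rightarrow> nat set" where
  "Cs a r = {x\<in>{1..p-1}. [(a * x) ^ r = 1] (mod p)}"

lemma card_Hs:
  assumes b: "b dvd p - 1"
  shows "card (Hs ((p - 1) div b)) = (p - 1) div b"
proof -
  have b0: "b > 0" using b p_gt1 by (auto intro!: Nat.gr0I)
  have inj: "inj_on (\<lambda>i. g ^ i mod p) {..<p-1}" using gbij by (simp add: bij_betw_def)
  have "Hs ((p - 1) div b) = (\<lambda>i. g ^ i mod p) ` {i. i < p - 1 \<and> b dvd i}"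
  proof (rule equalityI; rule subsetI)
    fix u assume u: "u \<in> Hs ((p - 1) div b)"
    hence u1: "u \<in> {1..p-1}" by (simp add: Hs_def)
    hence "b dvd ind u" using u ind_dvd_iff[OF u1 b] by (simp add: Hs_def)
    moreover have "ind u < p - 1" using ind_lt[OF u1] .
    moreover have "u = g ^ ind u mod p" using ind_pow[OF u1] by simp
    ultimately show "u \<in> (\<lambda>i. g ^ i mod p) ` {i. i < p - 1 \<and> b dvd i}" by blast
  next
    fix u assume "u \<in> (\<lambda>i. g ^ i mod p) ` {i. i < p - 1 \<and> b dvd i}"
    then obtain i where i: "i < p - 1" "b dvd i" "u = g ^ i mod p" by auto
    have u1: "u \<in> {1..p-1}" using gbij i by (auto simp: bij_betw_def)
    have "ind u = i" unfolding ind_def i(3) by (rule inv_into_f_f[OF inj]) (use i(1) in simp)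
    hence "[u ^ ((p - 1) div b) = 1] (mod p)" using ind_dvd_iff[OF u1 b] i by simp
    thus "u \<in> Hs ((p - 1) div b)" using u1 by (simp add: Hs_def)
  qed
  moreover have "inj_on (\<lambda>i. g ^ i mod p) {i. i < p - 1 \<and> b dvd i}"
    by (rule inj_on_subset[OF inj]) auto
  ultimately have "card (Hs ((p - 1) div b)) = card {i. i < p - 1 \<and> b dvd i}"
    by (simp add: card_image)
  also have "\<dots> = (p - 1) div b" using b0 b by (rule card_multiples)
  finally show ?thesis .
qed

lemma coprime_range: "a \<in> {1..p-1} \<Longrightarrow> coprime a p"
proof -
  assume a: "a \<in> {1..p-1}"
  have "\<not> p dvd a" using a small_not_dvd[of a p] by auto
  hence "coprime p a" using pr by (intro prime_imp_coprime)
  thus ?thesis by (simp add: coprime_commute)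
qed

lemma closure_Cs:
  assumes u: "u \<in> Hs r" and x: "x \<in> Cs a r"
  shows "(u * x) mod p \<in> Cs a r"
proof -
  have u1: "u \<in> {1..p-1}" and hu: "[u ^ r = 1] (mod p)" using u by (auto simp: Hs_def)
  have x1: "x \<in> {1..p-1}" and hx: "[(a * x) ^ r = 1] (mod p)" using x by (auto simp: Cs_def)
  have c1: "[(a * (u * x mod p)) ^ r = (a * (u * x)) ^ r] (mod p)"
    by (intro cong_pow cong_mult cong_refl) (simp add: Cong.cong_def)
  have e: "(a * (u * x)) ^ r = u ^ r * (a * x) ^ r" by (simp add: power_mult_distrib mult_ac)
  have c2: "[u ^ r * (a * x) ^ r = 1 * 1] (mod p)" by (intro cong_mult hu hx)
  have "[(a * (u * x mod p)) ^ r = 1] (mod p)"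
    using cong_trans[OF c1[unfolded e] c2] by simp
  moreover have "(u * x) mod p \<in> {1..p-1}" by (rule mod_mult_in_range[OF pr u1 x1])
  ultimately show ?thesis by (simp add: Cs_def)
qed

lemma card_Cs:
  assumes a: "a \<in> {1..p-1}"
  shows "card (Cs a r) = card (Hs r)"
proof -
  have "bij_betw (\<lambda>x. (a * x) mod p) (Cs a r) (Hs r)"
    unfolding bij_betw_def
  proof
    show "inj_on (\<lambda>x. (a * x) mod p) (Cs a r)"
      by (rule inj_on_subset[OF mod_mult_inj[OF pr a]]) (auto simp: Cs_def)
    show "(\<lambda>x. (a * x) mod p) ` Cs a r = Hs r"
    proof (rule equalityI; rule subsetI)
      fix y assume "y \<in> (\<lambda>x. (a * x) mod p) ` Cs a r"
      then obtain x where x: "x \<in> Cs a r" "y = (a * x) mod p" by auto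
      have x1: "x \<in> {1..p-1}" and hx: "[(a * x) ^ r = 1] (mod p)" using x by (auto simp: Cs_def)
      have "[y ^ r = (a * x) ^ r] (mod p)" unfolding x(2) by (intro cong_pow) (simp add: Cong.cong_def)
      hence "[y ^ r = 1] (mod p)" using hx by (rule cong_trans)
      moreover have "y \<in> {1..p-1}" unfolding x(2) by (rule mod_mult_in_range[OF pr a x1])
      ultimately show "y \<in> Hs r" by (simp add: Hs_def)
    next
      fix u assume u: "u \<in> Hs r"
      have u1: "u \<in> {1..p-1}" and hu: "[u ^ r = 1] (mod p)" using u by (auto simp: Hs_def)
      obtain a' where a': "[a * a' = Suc 0] (mod p)"
        using cong_solve_coprime_nat[OF coprime_range[OF a]] by blast
      have "a' mod p \<noteq> 0"
      proof
        assume "a' mod p = 0"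
        hence "[a * a' = 0] (mod p)" by (simp add: Cong.cong_def mod_mult_right_eq[symmetric])
        hence "[Suc 0 = 0] (mod p)" by (rule cong_trans[OF cong_sym[OF a']])
        thus False using p_gt1 by (simp add: Cong.cong_def)
      qed
      moreover have "a' mod p < p" using p_gt1 by simp
      ultimately have a'1: "a' mod p \<in> {1..p-1}" by auto
      define x where "x = (a' mod p * u) mod p"
      have x1: "x \<in> {1..p-1}" unfolding x_def by (rule mod_mult_in_range[OF pr a'1 u1])
      have "[a * x = a * (a' * u)] (mod p)" unfolding x_def
        by (intro cong_mult cong_refl) (simp add: Cong.cong_def mod_mult_left_eq)
      also have "a * (a' * u) = (a * a') * u" by (simp add: mult_ac)
      also have "[(a * a') * u = Suc 0 * u] (mod p)" by (intro cong_mult a' cong_refl)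
      finally have ax: "[a * x = u] (mod p)" by simp
      have "u < p" using u1 p_gt1 by auto
      hence y: "(a * x) mod p = u" using ax by (simp add: Cong.cong_def)
      have "[(a * x) ^ r = u ^ r] (mod p)" using ax by (rule cong_pow)
      hence "[(a * x) ^ r = 1] (mod p)" using hu by (rule cong_trans)
      hence "x \<in> Cs a r" using x1 by (simp add: Cs_def)
      thus "u \<in> (\<lambda>x. (a * x) mod p) ` Cs a r" using y by force
    qed
  qed
  thus ?thesis by (rule bij_betw_same_card)
qed


lemma count_A:
  assumes a: "a dvd p - 1" and b: "b dvd p - 1"
  shows "\<bar>real (card {h\<in>{1..p-1}. a dvd h \<and> b dvd ind h}) - real (p - 1) ^ 2 / (real a * real b * real p)\<bar>
           \<le> sqrt (real p) * (1 + ln ((real p - 1) / 2))"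
proof -
  have a0: "a > 0" using a p_gt1 by (auto intro!: Nat.gr0I)
  have b0: "b > 0" using b p_gt1 by (auto intro!: Nat.gr0I)
  have ale: "a \<le> p - 1" using a p_gt1 by (intro dvd_imp_le) auto
  hence a1: "a \<in> {1..p-1}" using a0 by auto
  define r where "r = (p - 1) div b"
  define N where "N = (p - 1) div a"
  define C where "C = Cs a r"
  have aN: "a * N = p - 1" using a by (simp add: N_def)
  have "N \<le> a * N" using a0 by simp
  hence Nle: "N \<le> p - 1" using aN by simp
  have CS: "C \<subseteq> {1..p-1}" by (auto simp: C_def Cs_def)
  have setq: "{h\<in>{1..p-1}. a dvd h \<and> b dvd ind h} = (\<lambda>j. a * j) ` {j\<in>{1..N}. j \<in> C}"
  proof (rule equalityI; rule subsetI)
    fix h assume h: "h \<in> {h\<in>{1..p-1}. a dvd h \<and> b dvd ind h}"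
    then obtain j where j: "h = a * j" by auto
    have h1: "h \<in> {1..p-1}" using h by simp
    have j1: "j \<ge> 1" using h1 j by (auto intro!: Nat.gr0I)
    have "a * j \<le> a * N" using h1 j aN by simp
    hence jN: "j \<le> N" using a0 by simp
    have "[h ^ r = 1] (mod p)" using h ind_dvd_iff[OF h1 b] by (simp add: r_def)
    hence "j \<in> C" using j j1 jN Nle by (simp add: C_def Cs_def)
    thus "h \<in> (\<lambda>j. a * j) ` {j\<in>{1..N}. j \<in> C}" using j j1 jN by auto
  next
    fix h assume "h \<in> (\<lambda>j. a * j) ` {j\<in>{1..N}. j \<in> C}"
    then obtain j where j: "h = a * j" "j \<in> {1..N}" "j \<in> C" by auto
    have "a * j \<le> a * N" using j by simp
    hence h1: "h \<in> {1..p-1}" using j aN a0 by auto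
    have "[h ^ r = 1] (mod p)" using j by (simp add: C_def Cs_def)
    hence "b dvd ind h" using ind_dvd_iff[OF h1 b] by (simp add: r_def)
    thus "h \<in> {h\<in>{1..p-1}. a dvd h \<and> b dvd ind h}" using h1 j by auto
  qed
  have "inj_on (\<lambda>j. a * j) {j\<in>{1..N}. j \<in> C}" using a0 by (auto intro: inj_onI)
  hence cardeq: "card {h\<in>{1..p-1}. a dvd h \<and> b dvd ind h} = card {j\<in>{1..N}. j \<in> C}"
    unfolding setq by (rule card_image)
  have cardC: "card C = r" unfolding C_def r_def using card_Cs[OF a1] card_Hs[OF b] by simp
  have Sb: "norm (\<Sum>x\<in>C. ef p (int t * int x)) \<le> sqrt (real p)" if t: "t \<in> {1..p-1}" for t
  proof (rule period_bound[OF pr CS _ _ _ t])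
    show "Hs r \<subseteq> {1..p-1}" by (auto simp: Hs_def)
    show "card (Hs r) = card C" unfolding C_def using card_Cs[OF a1] by simp
    show "\<And>u x. u \<in> Hs r \<Longrightarrow> x \<in> C \<Longrightarrow> u * x mod p \<in> C"
      unfolding C_def by (rule closure_Cs)
  qed
  have cf: "\<bar>real (card {j\<in>{1..N}. j \<in> C}) - real (card C) * real N / real p\<bar>
           \<le> sqrt (real p) * (1 + ln ((real p - 1) / 2))"
    by (rule count_fourier[OF p_ge3 podd CS Nle Sb])
  have "real (card C) * real N / real p = real (p - 1) ^ 2 / (real a * real b * real p)"
    using a b a0 b0 by (simp add: cardC r_def N_def real_of_nat_div power2_eq_square)
  thus ?thesis using cf cardeq by simp
qed

end

lemma coprime_by_primes:
  fixes a b :: nat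
  assumes "\<And>q. prime q \<Longrightarrow> q dvd a \<Longrightarrow> q dvd b \<Longrightarrow> False"
  shows "coprime a b"
proof (rule ccontr)
  assume "\<not> coprime a b"
  hence "gcd a b \<noteq> 1" by (simp only: coprime_iff_gcd_eq_1 not_False_eq_True)
  then obtain q where q: "prime q" "q dvd gcd a b" using prime_factor_nat by blast
  have "q dvd a" using dvd_trans[OF q(2) gcd_dvd1] .
  moreover have "q dvd b" using dvd_trans[OF q(2) gcd_dvd2] .
  ultimately show False using assms q(1) by blast
qed

lemma coprime_lift:
  fixes n m j0 :: nat
  assumes n: "0 < n" and mn: "m dvd n" and cop: "coprime j0 m"
  shows "\<exists>j. [j = j0] (mod m) \<and> coprime j n"
proof -
  define Q where "Q = {q \<in> prime_factors n. \<not> q dvd j0}"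
  define t where "t = \<Prod>Q"
  define j where "j = j0 + m * t"
  have finQ: "finite Q" by (simp add: Q_def)
  have Qprime: "\<And>q. q \<in> Q \<Longrightarrow> prime q" by (auto simp: Q_def in_prime_factors_iff)
  have "[j = j0] (mod m)" by (simp add: j_def Cong.cong_def)
  moreover have "coprime j n"
  proof (rule coprime_by_primes)
    fix q :: nat assume q: "prime q" "q dvd j" "q dvd n"
    show False
    proof (cases "q dvd j0")
      case True
      have "\<not> q dvd m"
      proof
        assume "q dvd m"
        hence "is_unit q" by (rule coprime_common_divisor[OF cop True])
        thus False using q by simp
      qed
      moreover have "\<not> q dvd t"
      proof
        assume "q dvd t"
        then obtain q' where q': "q' \<in> Q" "q dvd q'" using prime_dvd_prod_iff[OF finQ q(1)] by (auto simp: t_def)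
        hence "q = q'" using q Qprime by (intro primes_dvd_imp_eq) auto
        thus False using q' True by (simp add: Q_def)
      qed
      ultimately have "\<not> q dvd m * t" using q(1) by (simp add: prime_dvd_mult_iff)
      moreover have "q dvd m * t" using q(2) True by (simp add: j_def dvd_add_right_iff)
      ultimately show False by simp
    next
      case False
      hence "q \<in> Q" using q n by (simp add: Q_def in_prime_factors_iff)
      hence "q dvd t" unfolding t_def using finQ by (intro dvd_prodI) auto
      hence "q dvd m * t" by simp
      hence "q dvd j0" using q(2) by (simp add: j_def dvd_add_left_iff)
      thus False using False by simp
    qed
  qed
  ultimately show ?thesis by blast
qed

lemma unit_solution:
  fixes n h k :: nat
  assumes n: "0 < n" and gg: "gcd h n = gcd k n"
  shows "\<exists>j. coprime j n \<and> [j * h = k] (mod n)"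
proof -
  define e where "e = gcd h n"
  have e0: "e > 0" using n by (simp add: e_def)
  define h' where "h' = h div e"
  define k' where "k' = k div e"
  define m where "m = n div e"
  have hh: "h = e * h'" by (simp add: h'_def e_def)
  have kk: "k = e * k'" using gg by (simp add: k'_def e_def)
  have nn: "n = e * m" by (simp add: m_def e_def)
  have ch: "coprime h' m" unfolding h'_def m_def e_def using n by (intro div_gcd_coprime) auto
  have ck: "coprime k' m" unfolding k'_def m_def e_def gg using n by (intro div_gcd_coprime) auto
  obtain i where i: "[h' * i = Suc 0] (mod m)" using cong_solve_coprime_nat[OF ch] by blast
  have ci: "coprime i m"
  proof -
    have "coprime (h' * i) m" using cong_imp_coprime[OF cong_sym[OF i]] by simp
    thus ?thesis by simp
  qed
  define j0 where "j0 = i * k'"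
  have cj0: "coprime j0 m" using ci ck by (simp add: j0_def)
  have mn: "m dvd n" using nn by simp
  obtain j where j: "[j = j0] (mod m)" "coprime j n" using coprime_lift[OF n mn cj0] by blast
  have "[j * h' = j0 * h'] (mod m)" using j(1) by (intro cong_mult cong_refl)
  also have "j0 * h' = (h' * i) * k'" by (simp add: j0_def mult_ac)
  also have "[(h' * i) * k' = Suc 0 * k'] (mod m)" using i by (intro cong_mult cong_refl)
  finally have c1: "[j * h' = k'] (mod m)" by simp
  hence "(e * (j * h')) mod (e * m) = (e * k') mod (e * m)"
    by (simp add: Cong.cong_def mod_mult_mult1)
  hence "[j * h = k] (mod n)" by (simp add: Cong.cong_def hh kk nn mult_ac)
  thus ?thesis using j(2) by blast
qed


context proot
begin

lemma primroots_bij: "bij_betw (\<lambda>i. g ^ i mod p) (totatives (p - 1)) {g'\<in>{1..p-1}. residue_primroot p g'}"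
  using residue_primroot_bij_betw_primroots[OF p_gt1 groot] tot_p totatives_p by simp

lemma pow_mod_cong: "[(g ^ i mod p) ^ h = g ^ (i * h)] (mod p)"
proof -
  have "[(g ^ i mod p) ^ h = (g ^ i) ^ h] (mod p)" by (intro cong_pow) (simp add: Cong.cong_def)
  thus ?thesis by (simp add: power_mult)
qed

lemma G_iff:
  assumes h: "h \<in> {1..p-1}"
  shows "(\<exists>g'\<in>{1..p-1}. residue_primroot p g' \<and> [g' ^ h = h] (mod p)) \<longleftrightarrow>
         gcd (ind h) (p - 1) = gcd h (p - 1)"
proof
  assume "\<exists>g'\<in>{1..p-1}. residue_primroot p g' \<and> [g' ^ h = h] (mod p)"
  then obtain g' where g': "g' \<in> {1..p-1}" "residue_primroot p g'" "[g' ^ h = h] (mod p)" by blast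
  have "g' \<in> (\<lambda>i. g ^ i mod p) ` totatives (p - 1)"
    using primroots_bij g' by (auto simp: bij_betw_def)
  then obtain j where j: "j \<in> totatives (p - 1)" "g' = g ^ j mod p" by blast
  have cj: "coprime (p - 1) j" using j(1) by (simp add: in_totatives_iff coprime_commute)
  have "[g ^ (j * h) = g' ^ h] (mod p)" unfolding j(2) by (rule cong_sym[OF pow_mod_cong])
  also have "[g' ^ h = h] (mod p)" by (rule g'(3))
  also have "[h = g ^ ind h] (mod p)" by (rule cong_sym[OF ind_cong[OF h]])
  finally have "[j * h = ind h] (mod (p - 1))" by (simp only: pow_cong_iff)
  hence "gcd (j * h) (p - 1) = gcd (ind h) (p - 1)" by (rule cong_gcd_eq)
  moreover have "gcd (j * h) (p - 1) = gcd h (p - 1)" using cj by (rule gcd_mult_left_left_cancel)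
  ultimately show "gcd (ind h) (p - 1) = gcd h (p - 1)" by simp
next
  assume gg: "gcd (ind h) (p - 1) = gcd h (p - 1)"
  have n0: "0 < p - 1" using p_gt1 by simp
  obtain j where j: "coprime j (p - 1)" "[j * h = ind h] (mod (p - 1))"
    using unit_solution[OF n0 gg[symmetric]] by blast
  define j' where "j' = j mod (p - 1)"
  have "coprime j' (p - 1)" using j(1) unfolding j'_def
    by (metis coprime_commute coprime_mod_right_iff n0 less_not_refl2)
  moreover have "j' \<noteq> 0"
  proof
    assume "j' = 0"
    hence "coprime 0 (p - 1)" using \<open>coprime j' (p - 1)\<close> by simp
    hence "p - 1 = 1" by simp
    thus False using p_ge3 by simp
  qed
  moreover have "j' < p - 1" using n0 by (simp add: j'_def)
  ultimately have j't: "j' \<in> totatives (p - 1)" by (simp add: in_totatives_iff)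
  define g' where "g' = g ^ j' mod p"
  have "g' \<in> (\<lambda>i. g ^ i mod p) ` totatives (p - 1)" unfolding g'_def using j't by (rule imageI)
  hence g'm: "g' \<in> {g'\<in>{1..p-1}. residue_primroot p g'}"
    unfolding bij_betw_imp_surj_on[OF primroots_bij] .
  have "[j' * h = j * h] (mod (p - 1))" by (intro cong_mult cong_refl) (simp add: j'_def Cong.cong_def)
  hence "[j' * h = ind h] (mod (p - 1))" using j(2) by (rule cong_trans)
  hence c: "[g ^ (j' * h) = g ^ ind h] (mod p)" by (simp only: pow_cong_iff)
  have "[g' ^ h = g ^ (j' * h)] (mod p)" unfolding g'_def by (rule pow_mod_cong)
  also note c
  also have "[g ^ ind h = h] (mod p)" by (rule ind_cong[OF h])
  finally show "\<exists>g'\<in>{1..p-1}. residue_primroot p g' \<and> [g' ^ h = h] (mod p)" using g'm by blast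
qed

lemma G_eq: "G_PR_ANY p = card {h\<in>{1..p-1}. gcd (ind h) (p - 1) = gcd h (p - 1)}"
  unfolding G_PR_ANY_def using G_iff by (intro arg_cong[where f=card]) auto

end


lemma prime_dvd_prod_primes:
  fixes S :: "nat set"
  assumes "finite S" "\<forall>q\<in>S. prime q" "prime r"
  shows "r dvd \<Prod>S \<longleftrightarrow> r \<in> S"
proof
  assume "r dvd \<Prod>S"
  then obtain q where q: "q \<in> S" "r dvd q" using prime_dvd_prod_iff[OF assms(1) assms(3)] by auto
  hence "r = q" using assms by (intro primes_dvd_imp_eq) auto
  thus "r \<in> S" using q by simp
qed (use assms in \<open>auto intro: dvd_prodI\<close>)

lemma prod_primes_dvd:
  fixes S :: "nat set"
  assumes "finite S" "\<forall>q\<in>S. prime q" "\<forall>q\<in>S. q dvd y"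
  shows "\<Prod>S dvd y"
  using assms
proof (induction S rule: finite_induct)
  case empty
  then show ?case by simp
next
  case (insert q S)
  have qp: "prime q" using insert by simp
  have "\<not> q dvd \<Prod>S" using prime_dvd_prod_primes[OF insert(1) _ qp] insert by auto
  hence cop: "coprime q (\<Prod>S)" using qp by (intro prime_imp_coprime)
  have "\<Prod>S dvd y" using insert by simp
  moreover have "q dvd y" using insert by simp
  ultimately have "q * \<Prod>S dvd y" using cop by (intro divides_mult)
  thus ?case using insert by simp
qed

lemma gcd_eq_iff:
  fixes n e x :: nat
  assumes n: "n > 0" and e: "e dvd n"
  shows "gcd x n = e \<longleftrightarrow> (e dvd x \<and> (\<forall>q\<in>prime_factors (n div e). \<not> (e * q) dvd x))"
proof
  assume g: "gcd x n = e"
  have e0: "e > 0" using e n by (auto intro!: Nat.gr0I)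
  have "e dvd x" using g by (metis gcd_dvd1)
  moreover have "\<not> (e * q) dvd x" if q: "q \<in> prime_factors (n div e)" for q
  proof
    assume d: "(e * q) dvd x"
    have "q dvd n div e" using q by (simp add: in_prime_factors_iff)
    hence "e * q dvd e * (n div e)" by simp
    hence "e * q dvd n" using e by simp
    hence "e * q dvd gcd x n" using d by simp
    hence "e * q dvd e * 1" using g by simp
    hence "e = 0 \<or> q dvd 1" by (simp only: nat_mult_dvd_cancel_disj)
    hence "q dvd 1" using e0 by simp
    moreover have "prime q" using q by (simp add: in_prime_factors_iff)
    ultimately show False by simp
  qed
  ultimately show "e dvd x \<and> (\<forall>q\<in>prime_factors (n div e). \<not> (e * q) dvd x)" by blast
next
  assume a: "e dvd x \<and> (\<forall>q\<in>prime_factors (n div e). \<not> (e * q) dvd x)"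
  have e0: "e > 0" using e n by (auto intro!: Nat.gr0I)
  define d where "d = gcd x n"
  have ed: "e dvd d" using a e by (simp add: d_def)
  then obtain k where k: "d = e * k" by blast
  have "d dvd n" by (simp add: d_def)
  hence "e * k dvd e * (n div e)" using k e by simp
  hence kn: "k dvd n div e" using e0 by simp
  have "k = 1"
  proof (rule ccontr)
    assume "k \<noteq> 1"
    then obtain q where q: "prime q" "q dvd k" using prime_factor_nat by blast
    have nz: "n div e \<noteq> 0" using n e e0 by (metis dvd_div_eq_0_iff neq0_conv)
    have qP: "q \<in> prime_factors (n div e)" using q kn nz dvd_trans
      by (auto simp: in_prime_factors_iff)
    have "e * q dvd e * k" using q by simp
    hence "e * q dvd d" using k by simp
    hence "e * q dvd x" by (rule dvd_trans) (simp add: d_def)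
    thus False using a qP by blast
  qed
  thus "gcd x n = e" using k by (simp add: d_def)
qed

lemma prod_of_bool:
  "finite X \<Longrightarrow> (\<Prod>q\<in>X. of_bool (P q) :: real) = of_bool (\<forall>q\<in>X. P q)"
  by (induction X rule: finite_induct) auto

lemma indicator_expansion:
  fixes n e x :: nat
  assumes n: "n > 0" and e: "e dvd n"
  shows "(of_bool (gcd x n = e) :: real) =
     (\<Sum>S\<in>Pow (prime_factors (n div e)). (-1) ^ card S * of_bool (e * \<Prod>S dvd x))"
proof -
  define P where "P = prime_factors (n div e)"
  have finP: "finite P" by (simp add: P_def)
  have Pp: "\<forall>q\<in>P. prime q" by (auto simp: P_def in_prime_factors_iff)
  have e0: "e > 0" using e n by (auto intro!: Nat.gr0I)
  have "(of_bool (gcd x n = e) :: real) = of_bool (e dvd x) * (\<Prod>q\<in>P. 1 - of_bool (e * q dvd x))"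
    using gcd_eq_iff[OF n e, of x] finP by (simp add: P_def prod_of_bool[symmetric] of_bool_def)
  also have "(\<Prod>q\<in>P. 1 - of_bool (e * q dvd x) :: real) =
     (\<Sum>S\<in>Pow P. (-1) ^ card S * (\<Prod>q\<in>S. of_bool (e * q dvd x)) * (\<Prod>q\<in>P-S. 1))"
    by (rule prod_diff_conv_sum[OF finP])
  also have "of_bool (e dvd x) * \<dots> =
     (\<Sum>S\<in>Pow P. (-1) ^ card S * (of_bool (e dvd x) * (\<Prod>q\<in>S. of_bool (e * q dvd x))))"
    by (simp add: sum_distrib_left mult_ac)
  also have "\<dots> = (\<Sum>S\<in>Pow P. (-1) ^ card S * of_bool (e * \<Prod>S dvd x))"
  proof (intro sum.cong refl arg_cong2[where f="(*)"])
    fix S assume S: "S \<in> Pow P"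
    have finS: "finite S" using S finP finite_subset by blast
    have Sp: "\<forall>q\<in>S. prime q" using S Pp by auto
    have iff: "(e dvd x \<and> (\<forall>q\<in>S. e * q dvd x)) \<longleftrightarrow> e * \<Prod>S dvd x"
    proof
      assume h: "e dvd x \<and> (\<forall>q\<in>S. e * q dvd x)"
      then obtain y where y: "x = e * y" by blast
      have "\<forall>q\<in>S. q dvd y" using h y e0 by auto
      hence "\<Prod>S dvd y" using finS Sp by (intro prod_primes_dvd) auto
      thus "e * \<Prod>S dvd x" using y by simp
    next
      assume h: "e * \<Prod>S dvd x"
      have "e dvd x" using h dvd_mult_left by blast
      moreover have "e * q dvd x" if "q \<in> S" for q
      proof -
        have "q dvd \<Prod>S" using that finS by (intro dvd_prodI)
        hence "e * q dvd e * \<Prod>S" by simp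
        thus ?thesis using h by (rule dvd_trans)
      qed
      ultimately show "e dvd x \<and> (\<forall>q\<in>S. e * q dvd x)" by blast
    qed
    show "of_bool (e dvd x) * (\<Prod>q\<in>S. of_bool (e * q dvd x)) = (of_bool (e * \<Prod>S dvd x) :: real)"
      by (simp only: prod_of_bool[OF finS] of_bool_conj[symmetric] iff)
  qed
  finally show ?thesis by (simp add: P_def)
qed


lemma sum_swap3:
  "(\<Sum>h\<in>H. \<Sum>e\<in>E. \<Sum>s\<in>X e. \<Sum>t\<in>Y e. F h e s t) = (\<Sum>e\<in>E. \<Sum>s\<in>X e. \<Sum>t\<in>Y e. \<Sum>h\<in>H. F h e s t)"
proof -
  have "(\<Sum>h\<in>H. \<Sum>e\<in>E. \<Sum>s\<in>X e. \<Sum>t\<in>Y e. F h e s t) = (\<Sum>e\<in>E. \<Sum>h\<in>H. \<Sum>s\<in>X e. \<Sum>t\<in>Y e. F h e s t)"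
    by (rule sum.swap)
  also have "\<dots> = (\<Sum>e\<in>E. \<Sum>s\<in>X e. \<Sum>h\<in>H. \<Sum>t\<in>Y e. F h e s t)"
    by (rule sum.cong[OF refl], rule sum.swap)
  also have "\<dots> = (\<Sum>e\<in>E. \<Sum>s\<in>X e. \<Sum>t\<in>Y e. \<Sum>h\<in>H. F h e s t)"
    by (rule sum.cong[OF refl], rule sum.cong[OF refl], rule sum.swap)
  finally show ?thesis .
qed

lemma card_of_bool_real:
  "finite A \<Longrightarrow> real (card {x\<in>A. P x}) = (\<Sum>x\<in>A. of_bool (P x))"
  by (simp add: Int_def conj_commute)

lemma sum_delta_pair:
  assumes "finite D" "a \<in> D"
  shows "(\<Sum>e\<in>D. of_bool (a = e) * of_bool (b = e) :: real) = of_bool (b = a)"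
proof -
  have "(\<Sum>e\<in>D. of_bool (a = e) * of_bool (b = e) :: real) = (\<Sum>e\<in>D. if a = e then of_bool (b = e) else 0)"
    by (intro sum.cong refl) auto
  also have "\<dots> = of_bool (b = a)" using assms by (simp add: sum.delta)
  finally show ?thesis .
qed

lemma mobius_like_sum:
  fixes m :: nat
  assumes m: "m > 0"
  shows "(\<Sum>S\<in>Pow (prime_factors m). (-1) ^ card S / real (\<Prod>S)) = real (totient m) / real m"
proof -
  define P where "P = prime_factors m"
  have finP: "finite P" by (simp add: P_def)
  have "(\<Prod>q\<in>P. 1 - 1 / real q) = (\<Sum>S\<in>Pow P. (-1) ^ card S * (\<Prod>q\<in>S. 1 / real q) * (\<Prod>q\<in>P-S. 1))"
    by (rule prod_diff_conv_sum[OF finP])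
  also have "\<dots> = (\<Sum>S\<in>Pow P. (-1) ^ card S / real (\<Prod>S))"
  proof (intro sum.cong refl)
    fix S assume "S \<in> Pow P"
    have "(\<Prod>q\<in>S. 1 / real q) = 1 / (\<Prod>q\<in>S. real q)" by (simp add: prod_dividef)
    thus "(-1) ^ card S * (\<Prod>q\<in>S. 1 / real q) * (\<Prod>q\<in>P-S. 1) = (-1) ^ card S / real (\<Prod>S)"
      by simp
  qed
  finally have "(\<Sum>S\<in>Pow P. (-1) ^ card S / real (\<Prod>S)) = (\<Prod>q\<in>P. 1 - 1 / real q)" ..
  also have "\<dots> = real (totient m) / real m" using m by (simp add: totient_formula2 P_def)
  finally show ?thesis by (simp add: P_def)
qed

lemma card_Pow_pf_le:
  fixes m n :: nat
  assumes n: "n > 0" and mn: "m dvd n"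
  shows "card (Pow (prime_factors m)) \<le> num_divisors n"
proof -
  have m: "m > 0" using n mn by (auto intro!: Nat.gr0I)
  define P where "P = prime_factors m"
  have finP: "finite P" by (simp add: P_def)
  have Pp: "\<forall>q\<in>P. prime q" by (auto simp: P_def in_prime_factors_iff)
  have inj: "inj_on (\<lambda>S. \<Prod>S) (Pow P)"
  proof (rule inj_onI)
    fix S T assume S: "S \<in> Pow P" and T: "T \<in> Pow P" and e: "\<Prod>S = \<Prod>T"
    have fS: "finite S" "\<forall>q\<in>S. prime q" using S finP Pp finite_subset by auto
    have fT: "finite T" "\<forall>q\<in>T. prime q" using T finP Pp finite_subset by auto
    show "S = T"
    proof (rule Set.set_eqI)
      fix q
      show "q \<in> S \<longleftrightarrow> q \<in> T"
      proof (cases "prime q")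
        case True
        show ?thesis using prime_dvd_prod_primes[OF fS True] prime_dvd_prod_primes[OF fT True] e by simp
      next
        case False
        thus ?thesis using fS fT by auto
      qed
    qed
  qed
  have sub: "(\<lambda>S. \<Prod>S) ` Pow P \<subseteq> {d. d dvd n}"
  proof
    fix d assume "d \<in> (\<lambda>S. \<Prod>S) ` Pow P"
    then obtain S where S: "S \<in> Pow P" "d = \<Prod>S" by blast
    have fS: "finite S" "\<forall>q\<in>S. prime q" using S finP Pp finite_subset by auto
    have "\<forall>q\<in>S. q dvd m" using S by (auto simp: P_def in_prime_factors_iff)
    hence "d dvd m" using S fS by (simp add: prod_primes_dvd)
    thus "d \<in> {d. d dvd n}" using mn by auto
  qed
  have fin: "finite {d. d dvd n}" using n by simp
  have "card (Pow P) = card ((\<lambda>S. \<Prod>S) ` Pow P)" using inj by (simp add: card_image)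
  also have "\<dots> \<le> card {d. d dvd n}" by (rule card_mono[OF fin sub])
  finally show ?thesis by (simp add: num_divisors_def P_def)
qed


context proot
begin

definition PF :: "nat \<Rightarrow> nat set" where "PF e = prime_factors ((p - 1) div e)"
definition Acount :: "nat \<Rightarrow> nat set \<Rightarrow> nat set \<Rightarrow> nat" where
  "Acount e S T = card {h\<in>{1..p-1}. e * \<Prod>S dvd h \<and> e * \<Prod>T dvd ind h}"
definition sg :: "nat set \<Rightarrow> nat set \<Rightarrow> real" where
  "sg S T = (-1) ^ card S * (-1) ^ card T"

lemma G_expand:
  "real (G_PR_ANY p) = (\<Sum>e | e dvd p - 1. \<Sum>S\<in>Pow (PF e). \<Sum>T\<in>Pow (PF e). sg S T * real (Acount e S T))"
proof -
  define D where "D = {e. e dvd p - 1}"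
  have n0: "p - 1 > 0" using p_gt1 by simp
  have finD: "finite D" using n0 by (simp add: D_def)
  have "real (G_PR_ANY p) = (\<Sum>h\<in>{1..p-1}. of_bool (gcd (ind h) (p - 1) = gcd h (p - 1)))"
    unfolding G_eq by (rule card_of_bool_real) simp
  also have "\<dots> = (\<Sum>h\<in>{1..p-1}. \<Sum>e\<in>D. of_bool (gcd h (p - 1) = e) * of_bool (gcd (ind h) (p - 1) = e))"
    by (intro sum.cong refl sum_delta_pair[symmetric] finD) (simp add: D_def)
  also have "\<dots> = (\<Sum>h\<in>{1..p-1}. \<Sum>e\<in>D.
      (\<Sum>S\<in>Pow (PF e). (-1) ^ card S * of_bool (e * \<Prod>S dvd h)) *
      (\<Sum>T\<in>Pow (PF e). (-1) ^ card T * of_bool (e * \<Prod>T dvd ind h)))"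
  proof (intro sum.cong refl)
    fix h e assume "e \<in> D"
    hence e: "e dvd p - 1" by (simp add: D_def)
    show "(of_bool (gcd h (p - 1) = e) :: real) * of_bool (gcd (ind h) (p - 1) = e) =
      (\<Sum>S\<in>Pow (PF e). (-1) ^ card S * of_bool (e * \<Prod>S dvd h)) *
      (\<Sum>T\<in>Pow (PF e). (-1) ^ card T * of_bool (e * \<Prod>T dvd ind h))"
      unfolding PF_def by (simp only: indicator_expansion[OF n0 e])
  qed
  also have "\<dots> = (\<Sum>h\<in>{1..p-1}. \<Sum>e\<in>D. \<Sum>S\<in>Pow (PF e). \<Sum>T\<in>Pow (PF e).
      sg S T * (of_bool (e * \<Prod>S dvd h) * of_bool (e * \<Prod>T dvd ind h)))"
    by (simp add: sum_product sg_def mult_ac)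
  also have "\<dots> = (\<Sum>e\<in>D. \<Sum>S\<in>Pow (PF e). \<Sum>T\<in>Pow (PF e). \<Sum>h\<in>{1..p-1}.
      sg S T * (of_bool (e * \<Prod>S dvd h) * of_bool (e * \<Prod>T dvd ind h)))"
    by (rule sum_swap3)
  also have "\<dots> = (\<Sum>e\<in>D. \<Sum>S\<in>Pow (PF e). \<Sum>T\<in>Pow (PF e). sg S T * real (Acount e S T))"
  proof (intro sum.cong refl)
    fix e S T
    have "(\<Sum>h\<in>{1..p-1}. sg S T * (of_bool (e * \<Prod>S dvd h) * of_bool (e * \<Prod>T dvd ind h)))
        = sg S T * (\<Sum>h\<in>{1..p-1}. of_bool (e * \<Prod>S dvd h \<and> e * \<Prod>T dvd ind h))"
      by (simp only: sum_distrib_left of_bool_conj)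
    also have "(\<Sum>h\<in>{1..p-1}. of_bool (e * \<Prod>S dvd h \<and> e * \<Prod>T dvd ind h)) = real (Acount e S T)"
      unfolding Acount_def by (rule card_of_bool_real[symmetric]) simp
    finally show "(\<Sum>h\<in>{1..p-1}. sg S T * (of_bool (e * \<Prod>S dvd h) * of_bool (e * \<Prod>T dvd ind h)))
        = sg S T * real (Acount e S T)" .
  qed
  finally show ?thesis by (simp add: D_def)
qed


definition Mt :: "nat \<Rightarrow> nat set \<Rightarrow> nat set \<Rightarrow> real" where
  "Mt e S T = real (p - 1) ^ 2 / (real (e * \<Prod>S) * real (e * \<Prod>T) * real p)"

lemma PF_prod_dvd:
  assumes e: "e dvd p - 1" and S: "S \<in> Pow (PF e)"
  shows "e * \<Prod>S dvd p - 1"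
proof -
  have n0: "p - 1 > 0" using p_gt1 by simp
  have m0: "(p - 1) div e \<noteq> 0" using e n0 by (auto simp: dvd_div_eq_0_iff)
  have finS: "finite S" using S by (auto simp: PF_def intro: finite_subset)
  have "\<forall>q\<in>S. prime q" "\<forall>q\<in>S. q dvd (p - 1) div e" using S by (auto simp: PF_def in_prime_factors_iff)
  hence "\<Prod>S dvd (p - 1) div e" using finS by (intro prod_primes_dvd) auto
  hence "e * \<Prod>S dvd e * ((p - 1) div e)" by (rule mult_dvd_mono[OF dvd_refl])
  moreover have eq: "e * ((p - 1) div e) = p - 1" using e by simp
  ultimately show ?thesis by (simp only: eq)
qed

lemma err_bound:
  assumes e: "e dvd p - 1" and S: "S \<in> Pow (PF e)" and T: "T \<in> Pow (PF e)"
  shows "\<bar>real (Acount e S T) - Mt e S T\<bar> \<le> sqrt (real p) * (1 + ln ((real p - 1) / 2))"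
  unfolding Acount_def Mt_def
  by (rule count_A[OF PF_prod_dvd[OF e S] PF_prod_dvd[OF e T]])

lemma main_sum:
  assumes e: "e dvd p - 1"
  shows "(\<Sum>S\<in>Pow (PF e). \<Sum>T\<in>Pow (PF e). sg S T * Mt e S T) = real (totient ((p - 1) div e)) ^ 2 / real p"
proof -
  define m where "m = (p - 1) div e"
  have n0: "p - 1 > 0" using p_gt1 by simp
  have m0: "m > 0" using e n0 by (auto simp: m_def dvd_div_eq_0_iff intro!: Nat.gr0I)
  have e0: "e > 0" using e n0 by (auto intro!: Nat.gr0I)
  have pem: "p - 1 = e * m" using e by (simp add: m_def)
  have nem: "real (p - 1) = real e * real m" unfolding of_nat_mult[symmetric] using pem by (rule arg_cong)
  define f where "f = (\<lambda>S::nat set. (-1) ^ card S / real (\<Prod>S) :: real)"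
  define c where "c = real m ^ 2 / real p"
  have "(\<Sum>S\<in>Pow (PF e). \<Sum>T\<in>Pow (PF e). sg S T * Mt e S T) = (\<Sum>S\<in>Pow (PF e). \<Sum>T\<in>Pow (PF e). c * (f S * f T))"
  proof (intro sum.cong refl)
    fix S T
    show "sg S T * Mt e S T = c * (f S * f T)"
      unfolding sg_def Mt_def f_def c_def nem using e0 by (simp add: field_simps power2_eq_square)
  qed
  also have "\<dots> = c * ((\<Sum>S\<in>Pow (PF e). f S) * (\<Sum>T\<in>Pow (PF e). f T))"
    by (subst sum_product) (simp only: sum_distrib_left)
  also have "(\<Sum>S\<in>Pow (PF e). f S) = real (totient m) / real m"
    unfolding f_def PF_def m_def[symmetric] by (rule mobius_like_sum[OF m0])
  finally have X: "(\<Sum>S\<in>Pow (PF e). \<Sum>T\<in>Pow (PF e). sg S T * Mt e S T) =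
      c * (real (totient m) / real m * (real (totient m) / real m))" .
  have Y: "c * (real (totient m) / real m * (real (totient m) / real m)) = real (totient m) ^ 2 / real p"
    using m0 by (simp add: c_def field_simps power2_eq_square)
  show ?thesis unfolding m_def[symmetric] using X Y by simp
qed

lemma num_div_ge2: "num_divisors (p - 1) \<ge> 2"
proof -
  have n0: "p - 1 > 0" using p_gt1 by simp
  have "{1, p - 1} \<subseteq> {d. d dvd p - 1}" by auto
  hence "card {1, p - 1} \<le> num_divisors (p - 1)" unfolding num_divisors_def using n0 by (intro card_mono) auto
  moreover have "p - 1 \<noteq> 1" using p_ge3 by simp
  ultimately show ?thesis by simp
qed

lemma main_bound:
  "\<bar>real (G_PR_ANY p) - (1 / real (p - 1)) * (\<Sum>e | e dvd (p - 1). real (totient ((p - 1) div e)) ^ 2)\<bar>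
         \<le> real (num_divisors (p - 1)) ^ 3 * sqrt (real p) * (1 + ln (real p))"
proof -
  define D where "D = {e. e dvd p - 1}"
  define d where "d = real (num_divisors (p - 1))"
  define E where "E = sqrt (real p) * (1 + ln ((real p - 1) / 2))"
  define M where "M = (\<Sum>e\<in>D. \<Sum>S\<in>Pow (PF e). \<Sum>T\<in>Pow (PF e). sg S T * Mt e S T)"
  define Z where "Z = (\<Sum>e\<in>D. real (totient ((p - 1) div e)) ^ 2)"
  have n0: "p - 1 > 0" using p_gt1 by simp
  have finD: "finite D" using n0 by (simp add: D_def)
  have cardD: "real (card D) = d" by (simp add: D_def d_def num_divisors_def)
  have d2: "d \<ge> 2" using num_div_ge2 by (simp add: d_def)
  have Mz: "M = Z / real p" unfolding M_def Z_def
    by (simp add: main_sum D_def sum_divide_distrib)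
  have G: "real (G_PR_ANY p) = (\<Sum>e\<in>D. \<Sum>S\<in>Pow (PF e). \<Sum>T\<in>Pow (PF e). sg S T * real (Acount e S T))"
    using G_expand by (simp add: D_def)
  have "\<bar>real (G_PR_ANY p) - M\<bar> = \<bar>\<Sum>e\<in>D. \<Sum>S\<in>Pow (PF e). \<Sum>T\<in>Pow (PF e). sg S T * (real (Acount e S T) - Mt e S T)\<bar>"
    unfolding G M_def by (simp add: sum_subtractf right_diff_distrib)
  also have "\<dots> \<le> (\<Sum>e\<in>D. \<Sum>S\<in>Pow (PF e). \<Sum>T\<in>Pow (PF e). \<bar>sg S T * (real (Acount e S T) - Mt e S T)\<bar>)"
    by (rule order_trans[OF sum_abs], intro sum_mono, rule order_trans[OF sum_abs], intro sum_mono, rule sum_abs)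
  also have "\<dots> \<le> (\<Sum>e\<in>D. \<Sum>S\<in>Pow (PF e). \<Sum>T\<in>Pow (PF e). E)"
  proof (intro sum_mono)
    fix e S T assume e: "e \<in> D" and S: "S \<in> Pow (PF e)" and T: "T \<in> Pow (PF e)"
    have "\<bar>sg S T\<bar> = 1" by (simp add: sg_def abs_mult power_abs)
    thus "\<bar>sg S T * (real (Acount e S T) - Mt e S T)\<bar> \<le> E"
      using err_bound[OF _ S T] e by (simp add: abs_mult D_def E_def)
  qed
  also have "\<dots> = (\<Sum>e\<in>D. real (card (Pow (PF e))) ^ 2 * E)" by (simp add: power2_eq_square mult.assoc)
  also have "\<dots> \<le> (\<Sum>e\<in>D. d ^ 2 * E)"
  proof (intro sum_mono mult_right_mono power_mono)
    fix e assume "e \<in> D"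
    hence "(p - 1) div e dvd p - 1" by (auto simp: D_def)
    thus "real (card (Pow (PF e))) \<le> d" unfolding d_def PF_def
      using card_Pow_pf_le[OF n0] by simp
    show "0 \<le> E" using p_ge3 by (simp add: E_def)
  qed simp
  also have "\<dots> = d ^ 3 * E" using cardD by (simp add: power3_eq_cube power2_eq_square)
  finally have b1: "\<bar>real (G_PR_ANY p) - M\<bar> \<le> d ^ 3 * E" .
  have Zle: "Z \<le> d * real (p - 1) ^ 2"
  proof -
    have "Z \<le> (\<Sum>e\<in>D. real (p - 1) ^ 2)" unfolding Z_def
    proof (intro sum_mono power_mono)
      fix e assume "e \<in> D"
      have "totient ((p - 1) div e) \<le> (p - 1) div e" by (rule totient_le)
      also have "\<dots> \<le> p - 1" by simp
      finally show "real (totient ((p - 1) div e)) \<le> real (p - 1)" by simp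
    qed simp
    also have "\<dots> = d * real (p - 1) ^ 2" using cardD by simp
    finally show ?thesis .
  qed
  have Z0: "Z \<ge> 0" unfolding Z_def by (intro sum_nonneg) simp
  have b2: "\<bar>M - (1 / real (p - 1)) * Z\<bar> \<le> d"
  proof -
    have pp: "real (p - 1) = real p - 1" using p_gt1 by simp
    have "(1 / real (p - 1)) * Z - M = Z / (real (p - 1) * real p)"
      unfolding Mz using n0 p_gt1 pp by (simp add: field_simps)
    also have "\<dots> \<le> d * real (p - 1) ^ 2 / (real (p - 1) * real p)"
      using Zle n0 p_gt1 by (intro divide_right_mono) auto
    also have "\<dots> = d * (real (p - 1) / real p)" using n0 by (simp add: power2_eq_square)
    also have "\<dots> \<le> d * 1" using d2 p_gt1 by (intro mult_left_mono) auto
    finally have up: "(1 / real (p - 1)) * Z - M \<le> d" by simp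
    have "(1 / real (p - 1)) * Z - M \<ge> 0"
      unfolding Mz using n0 p_gt1 Z0 by (simp add: field_simps)
    thus ?thesis using up by simp
  qed
  have l2: "ln 2 \<ge> (1/4 :: real)"
  proof -
    have "1/2 - (1/2)^2 \<le> ln (1 + 1/2 :: real)" by (rule ln_one_plus_pos_lower_bound) auto
    also have "\<dots> \<le> ln 2" by (intro ln_mono) auto
    finally show ?thesis by (simp add: power2_eq_square)
  qed
  have lnb: "ln ((real p - 1) / 2) \<le> ln (real p) - 1/4"
  proof -
    have "ln ((real p - 1) / 2) \<le> ln (real p / 2)" using p_ge3 by (intro ln_mono) auto
    also have "\<dots> = ln (real p) - ln 2" using p_ge3 by (simp add: ln_div)
    finally show ?thesis using l2 by simp
  qed
  have sp: "sqrt (real p) \<ge> 1" using p_ge3 by simp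
  have E_le: "E \<le> sqrt (real p) * (1 + ln (real p)) - sqrt (real p) / 4"
    unfolding E_def using mult_left_mono[OF lnb, of "sqrt (real p)"] by (simp add: algebra_simps)
  have "d ^ 3 * E \<le> d ^ 3 * (sqrt (real p) * (1 + ln (real p)) - sqrt (real p) / 4)"
    by (rule mult_left_mono[OF E_le]) (use d2 in simp)
  hence "d ^ 3 * E \<le> d ^ 3 * (sqrt (real p) * (1 + ln (real p))) - d ^ 3 * sqrt (real p) / 4"
    by (simp add: algebra_simps)
  moreover have "d \<le> d ^ 3 * sqrt (real p) / 4"
  proof -
    have "(2::real) * 2 \<le> d * d" using d2 by (intro mult_mono) auto
    hence "d * 4 \<le> d * (d * d)" using d2 by (intro mult_left_mono) auto
    also have "\<dots> = d ^ 3 * 1" by (simp add: power3_eq_cube)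
    also have "\<dots> \<le> d ^ 3 * sqrt (real p)" using sp d2 by (intro mult_left_mono) auto
    finally show ?thesis by simp
  qed
  ultimately have fin: "d ^ 3 * E + d \<le> d ^ 3 * sqrt (real p) * (1 + ln (real p))" by (simp add: mult_ac)
  have "\<bar>real (G_PR_ANY p) - (1 / real (p - 1)) * Z\<bar> \<le> \<bar>real (G_PR_ANY p) - M\<bar> + \<bar>M - (1 / real (p - 1)) * Z\<bar>"
    using abs_triangle_ineq[of "real (G_PR_ANY p) - M" "M - (1 / real (p - 1)) * Z"] by simp
  also have "\<dots> \<le> d ^ 3 * E + d" using b1 b2 by (rule add_mono)
  also have "\<dots> \<le> d ^ 3 * sqrt (real p) * (1 + ln (real p))" by (rule fin)
  finally show ?thesis by (simp add: Z_def D_def d_def)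
qed

end

theorem mainTheorem3:
  fixes p :: nat
  assumes "prime p" and "odd p"
  shows "\<bar>real (G_PR_ANY p) - (1 / real (p - 1)) * (\<Sum>e | e dvd (p - 1). real (totient ((p - 1) div e)) ^ 2)\<bar>
         \<le> real (num_divisors (p - 1)) ^ 3 * sqrt (real p) * (1 + ln (real p))"
proof -
  obtain g where g: "residue_primroot p g" using prime_primitive_root_exists[OF prime_gt_1_nat[OF assms(1)] assms(1)] by blast
  interpret proot p g using assms g by unfold_locales
  show ?thesis by (rule main_bound)
qed

end
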